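(* Exact provisioning of each of the following queries requires sketches of size $\min(2^{\Omega(k)},\Omega(n))$ bits: (i) the boolean conjunctive query with negation $Q_{\mathrm{NOTSUB}}:\ \mathit{ans}()\,{:\!-}\,A(x),\neg B(x)$ over a schema with unary relations $A,B$ (true on $I$ iff some $x$ has $A(x)\in I$ and $B(x)\notin I$); (ii) the recursive Datalog (negation-free) st-connectivity query over a binary edge relation $E$ with constants $\mathtt{s},\mathtt{t}$: $\mathit{ans}()\,{:\!-}\,T(\mathtt{t})$; $T(y)\,{:\!-}\,E(x,y),T(x)$; $T(\mathtt{s})$.
   Context: A hypothetical $h$ maps each instance $I$ to a sub-instance $h(I)\subseteq I$; for hypotheticals $h_1,\dots,h_k$ and nonempty scenario $S\subseteq[k]$, $I[S]=\bigcup_{i\in S}h_i(I)$; $n=|I|$. A provisioning scheme for $Q$: a (possibly randomized) compression algorithm mapping $(I,h_1,\dots,h_k)$ to a sketch $\Gamma$, and an extraction algorithm that, for any scenario $S$ and using only $\Gamma$, outputs $Q(I[S])$ (correct with probability at least $0.99$ per scenario). "Requires sketches of size $\min(2^{\Omega(k)},\Omega(n))$" means: there is $c>0$ such that every such scheme produces, on some instance with at most $n$ tuples and $k$ hypotheticals, a sketch of at least $c\min(2^{ck},n)$ bits. *)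

theory Defs
  imports "HOL-Probability.Probability"
begin

definition hypothetical :: "('f set \<Rightarrow> 'f set) \<Rightarrow> bool" where
  "hypothetical h \<longleftrightarrow> (\<forall>I. h I \<subseteq> I)"

definition scenario_inst :: "'f set \<Rightarrow> ('f set \<Rightarrow> 'f set) list \<Rightarrow> nat set \<Rightarrow> 'f set" where
  "scenario_inst I hs S = (\<Union>i\<in>S. (hs ! i) I)"

definition provisioning_scheme ::
  "('f set \<Rightarrow> bool) \<Rightarrow> nat
   \<Rightarrow> ('f set \<Rightarrow> ('f set \<Rightarrow> 'f set) list \<Rightarrow> bool list pmf)
   \<Rightarrow> (bool list \<Rightarrow> nat set \<Rightarrow> bool) \<Rightarrow> bool" where
  "provisioning_scheme Q k compress extract \<longleftrightarrow>
     (\<forall>I hs S. finite I \<longrightarrow> length hs = k \<longrightarrow> (\<forall>h\<in>set hs. hypothetical h) \<longrightarrow>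
        S \<noteq> {} \<longrightarrow> S \<subseteq> {..<k} \<longrightarrow>
        measure_pmf.prob (compress I hs)
          {\<Gamma>. extract \<Gamma> S = Q (scenario_inst I hs S)} \<ge> 0.99)"

definition requires_sketch_size :: "('f set \<Rightarrow> bool) \<Rightarrow> bool" where
  "requires_sketch_size Q \<longleftrightarrow>
     (\<exists>c::real. c > 0 \<and>
       (\<forall>k n compress extract. k \<ge> 1 \<longrightarrow> provisioning_scheme Q k compress extract \<longrightarrow>
          (\<exists>I hs \<Gamma>. finite I \<and> card I \<le> n \<and> length hs = k \<and>
              (\<forall>h\<in>set hs. hypothetical h) \<and> \<Gamma> \<in> set_pmf (compress I hs) \<and>
              real (length \<Gamma>) \<ge> c * min (2 powr (c * real k)) (real n))))"

datatype ab_fact = A_fact nat | B_fact nat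

definition Q_NOTSUB :: "ab_fact set \<Rightarrow> bool" where
  "Q_NOTSUB I \<longleftrightarrow> (\<exists>x. A_fact x \<in> I \<and> B_fact x \<notin> I)"

datatype e_fact = E_fact nat nat

definition const_s :: nat where "const_s = 0"
definition const_t :: nat where "const_t = 1"

inductive T_derived :: "e_fact set \<Rightarrow> nat \<Rightarrow> bool" for I where
  T_base: "T_derived I const_s"
| T_step: "T_derived I x \<Longrightarrow> E_fact x y \<in> I \<Longrightarrow> T_derived I y"

definition Q_CONN :: "e_fact set \<Rightarrow> bool" where
  "Q_CONN I \<longleftrightarrow> T_derived I const_t"

end

theory Submission
  imports Defs "HOL-Library.Nat_Bijection"
begin

lemma ball_card:
  assumes "t \<le> N"
  shows "2^N * card {D. D \<subseteq> {..<N} \<and> card D \<le> t} \<le> 2^t * 3^N"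
proof -
  have eq: "{D. D \<subseteq> {..<N} \<and> card D \<le> t} = (\<Union>i\<le>t. {D. D \<subseteq> {..<N} \<and> card D = i})" by auto
  have "card {D. D \<subseteq> {..<N} \<and> card D \<le> t} \<le> (\<Sum>i\<le>t. card {D. D \<subseteq> {..<N} \<and> card D = i})"
    unfolding eq by (rule card_UN_le) simp
  also have "\<dots> = (\<Sum>i\<le>t. N choose i)" by (simp add: n_subsets)
  finally have c: "card {D. D \<subseteq> {..<N} \<and> card D \<le> t} \<le> (\<Sum>i\<le>t. N choose i)" .
  have "2^N * (\<Sum>i\<le>t. N choose i) = (\<Sum>i\<le>t. (N choose i) * 2^N)" by (simp add: sum_distrib_right mult.commute)
  also have "\<dots> \<le> (\<Sum>i\<le>t. (N choose i) * (2^t * 2^(N-i)))"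
  proof (rule sum_mono)
    fix i assume "i \<in> {..t}"
    hence "i \<le> N" "i \<le> t" using assms by auto
    hence "(2::nat)^N = 2^i * 2^(N-i)" by (simp add: power_add[symmetric])
    also have "\<dots> \<le> 2^t * 2^(N-i)" using \<open>i \<le> t\<close> by simp
    finally show "(N choose i) * 2^N \<le> (N choose i) * (2^t * 2^(N-i))" by simp
  qed
  also have "\<dots> \<le> (\<Sum>i\<le>N. (N choose i) * (2^t * 2^(N-i)))"
    by (rule sum_mono2) (use assms in auto)
  also have "\<dots> = 2^t * (\<Sum>i\<le>N. (N choose i) * 1^i * 2^(N-i))"
    by (simp add: sum_distrib_left mult_ac)
  also have "\<dots> = 2^t * 3^N" using binomial_ring[of "1::nat" 2 N] by (simp add: numeral_3_eq_3)
  finally show ?thesis using c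
    by (meson le_trans mult_le_mono2)
qed

lemma exists_good:
  fixes p :: "'a pmf"
  assumes A: "\<And>j. j < N \<Longrightarrow> measure_pmf.prob p {\<gamma>. P j \<gamma>} \<ge> 0.99"
  shows "\<exists>\<gamma>\<in>set_pmf p. 100 * card {j. j<N \<and> P j \<gamma>} \<ge> 99 * N"
proof (rule ccontr)
  assume "\<not> ?thesis"
  hence H: "\<forall>\<gamma>\<in>set_pmf p. 100 * card {j. j<N \<and> P j \<gamma>} + 1 \<le> 99 * N" by auto
  define f where "f \<gamma> = (\<Sum>j<N. indicator {\<gamma>. P j \<gamma>} \<gamma> :: real)" for \<gamma>
  have fcard: "f \<gamma> = real (card {j. j<N \<and> P j \<gamma>})" for \<gamma>
  proof -
    have "f \<gamma> = (\<Sum>j\<in>{j. j<N \<and> P j \<gamma>}. 1)"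
      unfolding f_def indicator_def
      by (rule sum.mono_neutral_cong_right) auto
    thus ?thesis by simp
  qed
  have intg: "\<And>j. integrable (measure_pmf p) (indicator {\<gamma>. P j \<gamma>} :: _ \<Rightarrow> real)"
    by (intro integrable_real_indicator) (auto simp: less_top[symmetric])
  have int: "measure_pmf.expectation p f = (\<Sum>j<N. measure_pmf.prob p {\<gamma>. P j \<gamma>})"
    unfolding f_def using Bochner_Integration.integral_sum[where I="{..<N}" and M="measure_pmf p" and f="\<lambda>j. indicator {\<gamma>. P j \<gamma>}"] intg by simp
  have ge: "measure_pmf.expectation p f \<ge> 0.99 * N"
  proof -
    have "(\<Sum>j<N. measure_pmf.prob p {\<gamma>. P j \<gamma>}) \<ge> (\<Sum>j<N. 0.99)"
      by (rule sum_mono) (use A in auto)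
    thus ?thesis using int by simp
  qed
  have le: "measure_pmf.expectation p f \<le> (99 * real N - 1) / 100"
  proof (rule measure_pmf.integral_le_const)
    show "integrable (measure_pmf p) f" unfolding f_def using intg by auto
    show "AE x in measure_pmf p. f x \<le> (99 * real N - 1) / 100"
      unfolding AE_measure_pmf_iff
    proof
      fix x assume "x \<in> set_pmf p"
      with H have "100 * card {j. j<N \<and> P j x} + 1 \<le> 99 * N" by auto
      hence "100 * real (card {j. j<N \<and> P j x}) + 1 \<le> 99 * real N" by linarith
      thus "f x \<le> (99 * real N - 1) / 100" using fcard by simp
    qed
  qed
  from ge le show False by simp
qed

lemma sum_pow2_less: "(\<Sum>i\<le>L. (2::nat)^i) < 2^(Suc L)"
  by (induction L) auto

lemma card_split_lt: "card {j. j<N \<and> Q j} + card {j. j<N \<and> \<not> Q j} = N"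
proof -
  have "card ({j. j<N \<and> Q j} \<union> {j. j<N \<and> \<not> Q j}) = card {j. j<N \<and> Q j} + card {j. j<N \<and> \<not> Q j}"
    by (rule card_Un_disjoint) auto
  moreover have "{j. j<N \<and> Q j} \<union> {j. j<N \<and> \<not> Q j} = {..<N}" by auto
  ultimately show ?thesis by simp
qed

lemma arith_final:
  fixes N a :: nat
  assumes h4: "(4::nat)^N \<le> 2^a * 3^N"
  shows "2*N \<le> 5*a"
proof -
  have e1: "((4::nat)^N)^5 = 1024^N"
  proof -
    have "((4::nat)^N)^5 = 4^(5*N)" by (simp add: power_mult[symmetric] mult.commute)
    also have "(4::nat)^(5*N) = (4^5)^N" by (rule power_mult)
    finally show ?thesis by simp
  qed
  have e2: "((2::nat)^a * 3^N)^5 = 2^(5*a) * 243^N"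
  proof -
    have "((2::nat)^a * 3^N)^5 = (2^a)^5 * (3^N)^5" by (simp add: power_mult_distrib)
    also have "\<dots> = 2^(5*a) * 3^(5*N)" by (simp add: power_mult[symmetric] mult.commute)
    also have "(3::nat)^(5*N) = (3^5)^N" by (rule power_mult)
    finally show ?thesis by simp
  qed
  have "((4::nat)^N)^5 \<le> (2^a * 3^N)^5" by (rule power_mono[OF h4]) simp
  hence c1: "1024^N \<le> (2::nat)^(5*a) * 243^N" by (simp only: e1 e2)
  have c2: "(4::nat)^N * 243^N \<le> 1024^N"
  proof -
    have "(4::nat)^N * 243^N = 972^N" by (simp flip: power_mult_distrib)
    also have "\<dots> \<le> 1024^N" by (rule power_mono) simp_all
    finally show ?thesis .
  qed
  have "(4::nat)^N * 243^N \<le> 2^(5*a) * 243^N" using c1 c2 by (rule order_trans[rotated])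
  hence "(4::nat)^N \<le> 2^(5*a)" by (rule mult_right_le_imp_le) simp
  moreover have "(4::nat)^N = 2^(2*N)" by (simp add: power_mult)
  ultimately have "(2::nat)^(2*N) \<le> 2^(5*a)" by simp
  thus "2*N \<le> 5*a" using power_le_imp_le_exp[of "2::nat" "2*N" "5*a"] by simp
qed

lemma main_count:
  fixes C :: "nat set \<Rightarrow> bool list pmf" and dec :: "bool list \<Rightarrow> nat \<Rightarrow> bool"
  assumes P: "\<And>x j. x \<subseteq> {..<N} \<Longrightarrow> j < N \<Longrightarrow> measure_pmf.prob (C x) {\<Gamma>. dec \<Gamma> j = (j \<in> x)} \<ge> 0.99"
  shows "\<exists>x \<subseteq> {..<N}. \<exists>\<Gamma>\<in>set_pmf (C x). 100 * length \<Gamma> \<ge> 38 * N"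
proof (rule ccontr)
  assume H0: "\<not> ?thesis"
  hence H: "\<And>x \<Gamma>. x \<subseteq> {..<N} \<Longrightarrow> \<Gamma> \<in> set_pmf (C x) \<Longrightarrow> 100 * length \<Gamma> < 38 * N"
    by (meson not_le)
  obtain \<Gamma>0 where "\<Gamma>0 \<in> set_pmf (C {})" using set_pmf_not_empty by fast
  from H[OF _ this] have N1: "N \<ge> 1" by simp
  have "\<forall>x. \<exists>\<Gamma>. x \<subseteq> {..<N} \<longrightarrow> \<Gamma> \<in> set_pmf (C x) \<and> 99*N \<le> 100 * card {j. j<N \<and> dec \<Gamma> j = (j\<in>x)}"
  proof
    fix x show "\<exists>\<Gamma>. x \<subseteq> {..<N} \<longrightarrow> \<Gamma> \<in> set_pmf (C x) \<and> 99*N \<le> 100 * card {j. j<N \<and> dec \<Gamma> j = (j\<in>x)}"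
    proof (cases "x \<subseteq> {..<N}")
      case True
      then show ?thesis using exists_good[of N "C x" "\<lambda>j \<Gamma>. dec \<Gamma> j = (j\<in>x)"] P by blast
    qed auto
  qed
  then obtain g where g: "\<And>x. x \<subseteq> {..<N} \<Longrightarrow> g x \<in> set_pmf (C x) \<and> 99*N \<le> 100 * card {j. j<N \<and> dec (g x) j = (j\<in>x)}"
    by metis
  define L0 where "L0 = (38*N - 1) div 100"
  define t where "t = N div 100"
  define Dset where "Dset = {D. D \<subseteq> {..<N} \<and> card D \<le> t}"
  define G where "G = g ` Pow {..<N}"
  have L0b: "100 * L0 \<le> 38*N - 1" unfolding L0_def by simp
  have tb: "100 * t \<le> N" unfolding t_def by simp
  have Gsub: "G \<subseteq> {xs. set xs \<subseteq> (UNIV::bool set) \<and> length xs \<le> L0}"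
  proof
    fix \<Gamma> assume "\<Gamma> \<in> G"
    then obtain x where x: "x \<subseteq> {..<N}" "\<Gamma> = g x" unfolding G_def by auto
    with g H have "100 * length \<Gamma> < 38 * N" by blast
    hence "length \<Gamma> \<le> L0" unfolding L0_def by linarith
    thus "\<Gamma> \<in> {xs. set xs \<subseteq> (UNIV::bool set) \<and> length xs \<le> L0}" by simp
  qed
  have finL: "finite {xs. set xs \<subseteq> (UNIV::bool set) \<and> length xs \<le> L0}"
    by (rule finite_lists_length_le) simp
  have "card G \<le> card {xs. set xs \<subseteq> (UNIV::bool set) \<and> length xs \<le> L0}"
    by (rule card_mono[OF finL Gsub])
  also have "\<dots> = (\<Sum>i\<le>L0. 2^i)" using card_lists_length_le[of "UNIV::bool set" L0] by simp
  finally have cardG: "card G < 2^(Suc L0)" using sum_pow2_less[of L0] by linarith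
  have finG: "finite G" using finite_subset[OF Gsub finL] .
  have finD: "finite Dset" unfolding Dset_def by (rule finite_subset[of _ "Pow {..<N}"]) auto
  define F where "F = (\<lambda>(\<Gamma>, D). ({j. j<N \<and> dec \<Gamma> j} - D) \<union> (D - {j. j<N \<and> dec \<Gamma> j}))"
  have cover: "Pow {..<N} \<subseteq> F ` (G \<times> Dset)"
  proof
    fix x assume x: "x \<in> Pow {..<N}"
    define D where "D = {j. j<N \<and> \<not> (dec (g x) j = (j\<in>x))}"
    have "card {j. j<N \<and> dec (g x) j = (j\<in>x)} + card D = N"
      unfolding D_def by (rule card_split_lt)
    moreover have "99*N \<le> 100 * card {j. j<N \<and> dec (g x) j = (j\<in>x)}" using g x by auto
    ultimately have "card D \<le> t" unfolding t_def by linarith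
    hence "D \<in> Dset" unfolding Dset_def D_def by auto
    moreover have "g x \<in> G" using x unfolding G_def by auto
    moreover have "x = F (g x, D)" using x unfolding F_def D_def by auto
    ultimately show "x \<in> F ` (G \<times> Dset)" by blast
  qed
  have "2^N = card (Pow {..<N::nat})" by (simp add: card_Pow)
  also have "\<dots> \<le> card (F ` (G \<times> Dset))"
    by (rule card_mono[OF _ cover]) (use finG finD in auto)
  also have "\<dots> \<le> card (G \<times> Dset)" by (rule card_image_le) (use finG finD in auto)
  also have "\<dots> = card G * card Dset" by (simp add: card_cartesian_product)
  finally have main: "2^N \<le> card G * card Dset" .
  show False
  proof (cases "N < 100")
    case True
    hence "t = 0" unfolding t_def by simp
    hence "Dset = {{}}" unfolding Dset_def by (auto simp: card_eq_0_iff dest: finite_subset)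
    with main cardG have "(2::nat)^N < 2^(Suc L0)" by simp
    hence "N < Suc L0" using power_less_imp_less_exp[of "2::nat" N "Suc L0"] by simp
    with L0b N1 show False by linarith
  next
    case False
    have cD: "2^N * card Dset \<le> 2^t * 3^N" unfolding Dset_def
      by (rule ball_card) (simp add: t_def)
    have "(2::nat)^N * 2^N \<le> 2^N * (card G * card Dset)" using main by simp
    also have "\<dots> = card G * (2^N * card Dset)" by simp
    also have "\<dots> \<le> 2^(Suc L0) * (2^t * 3^N)"
      by (rule mult_mono) (use cardG cD in auto)
    finally have "(4::nat)^N \<le> 2^(Suc L0 + t) * 3^N"
      by (simp add: power_add mult_ac flip: power_mult_distrib)
    define a where "a = Suc L0 + t"
    have h4: "(4::nat)^N \<le> 2^a * 3^N" using \<open>4^N \<le> _\<close> unfolding a_def .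
    have "2*N \<le> 5*a" by (rule arith_final[OF h4])
    hence x1: "2*N \<le> 5*L0 + 5 + 5*t" unfolding a_def by simp
    have x2: "100*L0 < 38*N" using L0b N1 by linarith
    from x1 x2 tb False show False by linarith
  qed
qed

definition bb :: "nat \<Rightarrow> nat \<Rightarrow> nat" where "bb j v = v div 2^j mod 2"
definition TT :: "nat \<Rightarrow> nat \<Rightarrow> nat \<Rightarrow> nat set" where
  "TT k m v = insert (k-1) ((\<lambda>j. 2*j + bb j v) ` {..<m})"

lemma bb_less: "bb j v < 2" unfolding bb_def by simp

lemma TT_sub: assumes "2*m < k" shows "TT k m v \<subseteq> {..<k} \<and> TT k m v \<noteq> {}"
proof -
  have "2*j + bb j v < k" if "j < m" for j
  proof -
    have "bb j v < 2" by (rule bb_less)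
    with that assms show ?thesis by linarith
  qed
  moreover have "k - 1 < k" using assms by simp
  ultimately show ?thesis unfolding TT_def by auto
qed

lemma TT_mem_low:
  assumes "2*m < k" "j < m" "\<beta> < 2"
  shows "2*j+\<beta> \<in> TT k m v \<longleftrightarrow> \<beta> = bb j v"
proof
  assume "2*j+\<beta> \<in> TT k m v"
  then consider "2*j+\<beta> = k-1" | j' where "j' < m" "2*j+\<beta> = 2*j' + bb j' v"
    unfolding TT_def by auto
  then show "\<beta> = bb j v"
  proof cases
    case 1 with assms show ?thesis by linarith
  next
    case 2
    have "bb j' v < 2" by (rule bb_less)
    with 2 assms have "j = j'" by linarith
    with 2 show ?thesis by simp
  qed
next
  assume "\<beta> = bb j v"
  thus "2*j+\<beta> \<in> TT k m v" using assms unfolding TT_def by auto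
qed

lemma mod_pow2_step: "v mod 2^(Suc j) = v mod 2^j + 2^j * bb j v"
proof -
  have "v mod (2^j * 2) = 2^j * (v div 2^j mod 2) + v mod 2^j" by (rule mod_mult2_eq)
  thus ?thesis by (simp add: bb_def mult.commute)
qed

lemma mod_eq_bits: "(\<forall>j<m. bb j v = bb j w) \<Longrightarrow> v mod 2^m = w mod 2^m"
proof (induction m)
  case 0 then show ?case by simp
next
  case (Suc m)
  then show ?case by (simp only: mod_pow2_step) simp
qed

lemma TT_inj_sub:
  assumes "2*m < k" "v < 2^m" "w < 2^m" "TT k m w \<subseteq> TT k m v"
  shows "w = v"
proof -
  have "\<forall>j<m. bb j w = bb j v"
  proof (intro allI impI)
    fix j assume j: "j < m"
    have "2*j + bb j w \<in> TT k m w" using TT_mem_low[OF assms(1) j bb_less] by simp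
    with assms(4) have "2*j + bb j w \<in> TT k m v" by blast
    thus "bb j w = bb j v" using TT_mem_low[OF assms(1) j bb_less] by simp
  qed
  hence "w mod 2^m = v mod 2^m" by (rule mod_eq_bits)
  with assms show ?thesis by simp
qed

lemma scheme_bound:
  fixes Inst :: "nat set \<Rightarrow> 'f set" and Hs :: "nat set \<Rightarrow> ('f set \<Rightarrow> 'f set) list"
  assumes sch: "provisioning_scheme Q k compress extract"
  and Ss: "\<And>j. j<N \<Longrightarrow> Ss j \<noteq> {} \<and> Ss j \<subseteq> {..<k}"
  and fin: "\<And>x. x \<subseteq> {..<N} \<Longrightarrow> finite (Inst x) \<and> card (Inst x) \<le> n \<and> length (Hs x) = k \<and> (\<forall>h\<in>set (Hs x). hypothetical h)"
  and ans: "\<And>x j. x \<subseteq> {..<N} \<Longrightarrow> j<N \<Longrightarrow> Q (scenario_inst (Inst x) (Hs x) (Ss j)) = (j \<in> x)"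
  shows "\<exists>I hs \<Gamma>. finite I \<and> card I \<le> n \<and> length hs = k \<and> (\<forall>h\<in>set hs. hypothetical h) \<and> \<Gamma> \<in> set_pmf (compress I hs) \<and> 38 * N \<le> 100 * length \<Gamma>"
proof -
  have "\<exists>x \<subseteq> {..<N}. \<exists>\<Gamma>\<in>set_pmf (compress (Inst x) (Hs x)). 100 * length \<Gamma> \<ge> 38 * N"
  proof (rule main_count[where dec = "\<lambda>\<Gamma> j. extract \<Gamma> (Ss j)"])
    fix x j assume x: "x \<subseteq> {..<N}" and j: "j<N"
    have "measure_pmf.prob (compress (Inst x) (Hs x)) {\<Gamma>. extract \<Gamma> (Ss j) = Q (scenario_inst (Inst x) (Hs x) (Ss j))} \<ge> 0.99"
      using sch fin[OF x] Ss[OF j] unfolding provisioning_scheme_def by blast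
    thus "measure_pmf.prob (compress (Inst x) (Hs x)) {\<Gamma>. extract \<Gamma> (Ss j) = (j \<in> x)} \<ge> 0.99"
      using ans[OF x j] by simp
  qed
  thus ?thesis using fin by blast
qed

lemma scenario_inst_map:
  assumes "S \<subseteq> {..<k}"
  shows "scenario_inst I (map h [0..<k]) S = (\<Union>i\<in>S. h i I)"
  unfolding scenario_inst_def using assms by (intro SUP_cong) auto

definition hN :: "nat \<Rightarrow> nat \<Rightarrow> nat \<Rightarrow> ab_fact set \<Rightarrow> ab_fact set" where
  "hN k m i J = {f \<in> J. case f of A_fact v \<Rightarrow> i \<in> TT k m v | B_fact v \<Rightarrow> i \<notin> TT k m v}"

lemma notsub_constr:
  assumes sch: "provisioning_scheme Q_NOTSUB k compress extract" and km: "2*m < k"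
  shows "\<exists>I hs \<Gamma>. finite I \<and> card I \<le> 2*2^m \<and> length hs = k \<and> (\<forall>h\<in>set hs. hypothetical h) \<and> \<Gamma> \<in> set_pmf (compress I hs) \<and> 38 * 2^m \<le> 100 * length \<Gamma>"
proof (rule scheme_bound[OF sch, where Ss = "TT k m" and Inst = "\<lambda>x::nat set. A_fact ` x \<union> B_fact ` x" and Hs = "\<lambda>x. map (hN k m) [0..<k]"])
  fix j show "TT k m j \<noteq> {} \<and> TT k m j \<subseteq> {..<k}" using TT_sub[OF km] by blast
next
  fix x :: "nat set" assume x: "x \<subseteq> {..<2^m}"
  hence fx: "finite x" by (rule finite_subset) simp
  have "card x \<le> 2^m" using card_mono[OF _ x] by simp
  moreover have "card (A_fact ` x \<union> B_fact ` x) \<le> card x + card x"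
    by (rule order_trans[OF card_Un_le add_mono[OF card_image_le card_image_le]]) (use fx in auto)
  ultimately have "card (A_fact ` x \<union> B_fact ` x) \<le> 2*2^m" by linarith
  moreover have "\<forall>h\<in>set (map (hN k m) [0..<k]). hypothetical h"
    by (auto simp: hypothetical_def hN_def)
  ultimately show "finite (A_fact ` x \<union> B_fact ` x) \<and> card (A_fact ` x \<union> B_fact ` x) \<le> 2*2^m \<and>
     length (map (hN k m) [0..<k]) = k \<and> (\<forall>h\<in>set (map (hN k m) [0..<k]). hypothetical h)"
    using fx by simp
next
  fix x :: "nat set" and j :: nat assume x: "x \<subseteq> {..<2^m}" and j: "j < (2::nat)^m"
  let ?S = "TT k m j"
  have S: "?S \<subseteq> {..<k}" using TT_sub[OF km] by blast
  have SI: "scenario_inst (A_fact ` x \<union> B_fact ` x) (map (hN k m) [0..<k]) ?S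
        = (\<Union>i\<in>?S. hN k m i (A_fact ` x \<union> B_fact ` x))" by (rule scenario_inst_map[OF S])
  have memA: "A_fact v \<in> (\<Union>i\<in>?S. hN k m i (A_fact ` x \<union> B_fact ` x)) \<longleftrightarrow> v \<in> x \<and> (\<exists>i\<in>?S. i \<in> TT k m v)" for v
    by (auto simp: hN_def)
  have memB: "B_fact v \<in> (\<Union>i\<in>?S. hN k m i (A_fact ` x \<union> B_fact ` x)) \<longleftrightarrow> v \<in> x \<and> (\<exists>i\<in>?S. i \<notin> TT k m v)" for v
    by (auto simp: hN_def)
  show "Q_NOTSUB (scenario_inst (A_fact ` x \<union> B_fact ` x) (map (hN k m) [0..<k]) ?S) = (j \<in> x)"
    unfolding SI Q_NOTSUB_def memA memB
  proof
    assume "\<exists>v. (v \<in> x \<and> (\<exists>i\<in>?S. i \<in> TT k m v)) \<and> \<not> (v \<in> x \<and> (\<exists>i\<in>?S. i \<notin> TT k m v))"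
    then obtain v where v: "v \<in> x" "?S \<subseteq> TT k m v" by blast
    have "j = v" by (rule TT_inj_sub[OF km _ j v(2)]) (use v x in auto)
    with v show "j \<in> x" by simp
  next
    assume "j \<in> x"
    moreover have "k - 1 \<in> ?S" unfolding TT_def by simp
    ultimately show "\<exists>v. (v \<in> x \<and> (\<exists>i\<in>?S. i \<in> TT k m v)) \<and> \<not> (v \<in> x \<and> (\<exists>i\<in>?S. i \<notin> TT k m v))"
      by blast
  qed
qed

definition enc :: "nat \<Rightarrow> nat \<Rightarrow> nat" where "enc j p = prod_encode (j, p)"

lemma enc_inj[simp]: "enc j p = enc j' p' \<longleftrightarrow> j = j' \<and> p = p'"
  unfolding enc_def by simp

lemma enc00: "enc 0 0 = const_s" unfolding enc_def const_s_def by (simp add: prod_encode_def)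
lemma enc01: "const_t = enc 0 1" unfolding enc_def const_t_def by (simp add: prod_encode_def)

lemma enc_ne_t: "p < 2^j \<Longrightarrow> enc j p \<noteq> const_t"
  unfolding enc01 by auto

definition trieE :: "nat \<Rightarrow> e_fact set" where
  "trieE m = (\<lambda>(j,p,\<beta>). E_fact (enc j p) (enc (Suc j) (p + 2^j*\<beta>))) ` (SIGMA j:{..<m}. {..<2^j} \<times> {..<2})"
definition leafE :: "nat \<Rightarrow> nat set \<Rightarrow> e_fact set" where
  "leafE m x = (\<lambda>v. E_fact (enc m v) const_t) ` x"

definition hC :: "nat \<Rightarrow> nat \<Rightarrow> nat \<Rightarrow> e_fact set \<Rightarrow> e_fact set" where
  "hC k m i J = {e \<in> J. (\<exists>j p \<beta>. j<m \<and> p<2^j \<and> \<beta><2 \<and> 2*j+\<beta> = i \<and> e = E_fact (enc j p) (enc (Suc j) (p + 2^j*\<beta>)))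
                  \<or> (i = k-1 \<and> (\<exists>v. e = E_fact (enc m v) const_t))}"

lemma sum_pow2_lt: "(\<Sum>j<m. (2::nat)^j) < 2^m"
  by (induction m) auto

lemma card_trieE: "card (trieE m) \<le> 2*2^m"
proof -
  have "card (trieE m) \<le> card (SIGMA j:{..<m}. {..<(2::nat)^j} \<times> {..<(2::nat)})"
    unfolding trieE_def by (rule card_image_le) auto
  also have "\<dots> = (\<Sum>j<m. 2^j * 2)" by (simp add: card_cartesian_product)
  also have "\<dots> = 2 * (\<Sum>j<m. 2^j)" by (simp add: sum_distrib_left mult.commute)
  also have "\<dots> \<le> 2 * 2^m" using sum_pow2_lt[of m] by simp
  finally show ?thesis .
qed

lemma conn_forward:
  assumes km: "2*m < k" and w: "w < 2^m" and x: "x \<subseteq> {..<2^m}"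
  and I': "I' = (\<Union>i\<in>TT k m w. hC k m i (trieE m \<union> leafE m x))"
  shows "T_derived I' y \<Longrightarrow> (\<exists>j\<le>m. y = enc j (w mod 2^j)) \<or> (y = const_t \<and> w \<in> x)"
proof (induction rule: T_derived.induct)
  case T_base
  then show ?case using enc00 by (intro disjI1 exI[of _ 0]) simp
next
  case (T_step y z)
  from T_step.hyps(2) obtain i where i: "i \<in> TT k m w" and e: "E_fact y z \<in> hC k m i (trieE m \<union> leafE m x)"
    unfolding I' by blast
  from e have einst: "E_fact y z \<in> trieE m \<union> leafE m x" unfolding hC_def by blast
  from e consider (tr) j p \<beta> where "j<m" "p<2^j" "\<beta><2" "2*j+\<beta> = i" "y = enc j p" "z = enc (Suc j) (p + 2^j*\<beta>)"
    | (lf) v where "i = k-1" "y = enc m v" "z = const_t"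
    unfolding hC_def by blast
  then show ?case
  proof cases
    case tr
    have \<beta>: "\<beta> = bb j w" using TT_mem_low[OF km tr(1) tr(3)] i tr(4) by simp
    from T_step.IH show ?thesis
    proof
      assume "\<exists>j'\<le>m. y = enc j' (w mod 2^j')"
      then obtain j' where "j' \<le> m" "y = enc j' (w mod 2^j')" by blast
      with tr have "j' = j" "p = w mod 2^j" by auto
      hence "z = enc (Suc j) (w mod 2^(Suc j))" using tr(6) \<beta> using mod_pow2_step[of w j] by simp
      thus ?thesis using tr(1) by (intro disjI1 exI[of _ "Suc j"]) simp
    next
      assume "y = const_t \<and> w \<in> x"
      with tr enc_ne_t show ?thesis by blast
    qed
  next
    case lf
    have vx: "v \<in> x"
    proof -
      from einst consider "E_fact y z \<in> trieE m" | "E_fact y z \<in> leafE m x" by blast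
      then show ?thesis
      proof cases
        case 1
        then obtain j p \<beta> where "j<m" "p < 2^j" "\<beta> < 2" "z = enc (Suc j) (p + 2^j*\<beta>)"
          unfolding trieE_def by auto
        moreover have "p + 2^j*\<beta> < 2^(Suc j)"
        proof -
          have "\<beta> = 0 \<or> \<beta> = 1" using calculation by linarith
          thus ?thesis using calculation by auto
        qed
        ultimately show ?thesis using enc_ne_t lf(3) by blast
      next
        case 2 then show ?thesis using lf unfolding leafE_def by auto
      qed
    qed
    hence vlt: "v < 2^m" using x by auto
    from T_step.IH show ?thesis
    proof
      assume "\<exists>j'\<le>m. y = enc j' (w mod 2^j')"
      then obtain j' where "j' \<le> m" "y = enc j' (w mod 2^j')" by blast
      with lf have "v = w mod 2^m" by auto
      with w have "v = w" by simp
      with vx lf show ?thesis by simp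
    next
      assume "y = const_t \<and> w \<in> x"
      with lf vlt enc_ne_t show ?thesis by blast
    qed
  qed
qed

lemma conn_backward:
  assumes km: "2*m < k" and w: "w < 2^m"
  and I': "I' = (\<Union>i\<in>TT k m w. hC k m i (trieE m \<union> leafE m x))"
  shows "j \<le> m \<Longrightarrow> T_derived I' (enc j (w mod 2^j))"
proof (induction j)
  case 0
  then show ?case using enc00 T_derived.T_base by simp
next
  case (Suc j)
  hence jm: "j < m" by simp
  have IH: "T_derived I' (enc j (w mod 2^j))" using Suc by simp
  let ?e = "E_fact (enc j (w mod 2^j)) (enc (Suc j) (w mod 2^j + 2^j * bb j w))"
  have "?e \<in> trieE m" unfolding trieE_def
    using jm bb_less[of j w] by (intro image_eqI[where x="(j, w mod 2^j, bb j w)"]) auto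
  moreover have "2*j + bb j w \<in> TT k m w" using TT_mem_low[OF km jm bb_less] by simp
  ultimately have "?e \<in> I'" unfolding I' hC_def using jm bb_less[of j w]
    by (intro UN_I[where a="2*j + bb j w"]) auto
  from T_derived.T_step[OF IH this] show ?case using mod_pow2_step[of w j] by simp
qed

lemma conn_iff:
  assumes km: "2*m < k" and w: "w < 2^m" and x: "x \<subseteq> {..<2^m}"
  shows "Q_CONN (\<Union>i\<in>TT k m w. hC k m i (trieE m \<union> leafE m x)) \<longleftrightarrow> w \<in> x"
proof -
  let ?I = "\<Union>i\<in>TT k m w. hC k m i (trieE m \<union> leafE m x)"
  show ?thesis unfolding Q_CONN_def
  proof
    assume "T_derived ?I const_t"
    from conn_forward[OF km w x refl this] show "w \<in> x"
    proof
      assume "\<exists>j\<le>m. const_t = enc j (w mod 2^j)"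
      then obtain j where "const_t = enc j (w mod 2^j)" by blast
      moreover have "w mod 2^j < 2^j" by simp
      ultimately show ?thesis using enc_ne_t by metis
    qed simp
  next
    assume wx: "w \<in> x"
    have T: "T_derived ?I (enc m (w mod 2^m))" by (rule conn_backward[OF km w refl]) simp
    have "E_fact (enc m w) const_t \<in> leafE m x" using wx unfolding leafE_def by auto
    moreover have "k - 1 \<in> TT k m w" unfolding TT_def by simp
    ultimately have "E_fact (enc m w) const_t \<in> ?I" unfolding hC_def
      by (intro UN_I[where a="k-1"]) auto
    from T_derived.T_step[OF T] this w show "T_derived ?I const_t" by simp
  qed
qed

lemma conn_constr:
  assumes sch: "provisioning_scheme Q_CONN k compress extract" and km: "2*m < k"
  shows "\<exists>I hs \<Gamma>. finite I \<and> card I \<le> 3*2^m \<and> length hs = k \<and> (\<forall>h\<in>set hs. hypothetical h) \<and> \<Gamma> \<in> set_pmf (compress I hs) \<and> 38 * 2^m \<le> 100 * length \<Gamma>"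
proof (rule scheme_bound[OF sch, where Ss = "TT k m" and Inst = "\<lambda>x::nat set. trieE m \<union> leafE m x" and Hs = "\<lambda>x. map (hC k m) [0..<k]"])
  fix j show "TT k m j \<noteq> {} \<and> TT k m j \<subseteq> {..<k}" using TT_sub[OF km] by blast
next
  fix x :: "nat set" assume x: "x \<subseteq> {..<2^m}"
  hence fx: "finite x" by (rule finite_subset) simp
  have ft: "finite (trieE m)" unfolding trieE_def by auto
  have fl: "finite (leafE m x)" unfolding leafE_def using fx by auto
  have "card x \<le> 2^m" using card_mono[OF _ x] by simp
  moreover have "card (leafE m x) \<le> card x" unfolding leafE_def by (rule card_image_le[OF fx])
  moreover have "card (trieE m \<union> leafE m x) \<le> card (trieE m) + card (leafE m x)" by (rule card_Un_le)
  ultimately have "card (trieE m \<union> leafE m x) \<le> 3*2^m" using card_trieE[of m] by linarith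
  moreover have "\<forall>h\<in>set (map (hC k m) [0..<k]). hypothetical h"
    by (auto simp: hypothetical_def hC_def)
  ultimately show "finite (trieE m \<union> leafE m x) \<and> card (trieE m \<union> leafE m x) \<le> 3*2^m \<and>
     length (map (hC k m) [0..<k]) = k \<and> (\<forall>h\<in>set (map (hC k m) [0..<k]). hypothetical h)"
    using ft fl by simp
next
  fix x :: "nat set" and j :: nat assume x: "x \<subseteq> {..<2^m}" and j: "j < (2::nat)^m"
  have S: "TT k m j \<subseteq> {..<k}" using TT_sub[OF km] by blast
  show "Q_CONN (scenario_inst (trieE m \<union> leafE m x) (map (hC k m) [0..<k]) (TT k m j)) = (j \<in> x)"
    unfolding scenario_inst_map[OF S] by (rule conn_iff[OF km j x])
qed

lemma scen_replicate: "1 \<le> k \<Longrightarrow> scenario_inst I (replicate k id) {0} = I"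
  unfolding scenario_inst_def by simp

lemma small_notsub:
  assumes sch: "provisioning_scheme Q_NOTSUB k compress extract" and k: "1 \<le> k"
  shows "\<exists>I hs \<Gamma>. finite I \<and> card I \<le> 1 \<and> length hs = k \<and> (\<forall>h\<in>set hs. hypothetical h) \<and> \<Gamma> \<in> set_pmf (compress I hs) \<and> 38 * 1 \<le> 100 * length \<Gamma>"
proof (rule scheme_bound[OF sch, where Ss = "\<lambda>_. {0}" and Inst = "\<lambda>x::nat set. A_fact ` x" and Hs = "\<lambda>x. replicate k id"])
  fix j show "{0::nat} \<noteq> {} \<and> {0} \<subseteq> {..<k}" using k by auto
next
  fix x :: "nat set" assume x: "x \<subseteq> {..<1}"
  hence fx: "finite x" by (rule finite_subset) simp
  have "card x \<le> 1" using card_mono[OF _ x] by simp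
  moreover have "card (A_fact ` x) \<le> card x" by (rule card_image_le[OF fx])
  ultimately show "finite (A_fact ` x) \<and> card (A_fact ` x) \<le> 1 \<and> length (replicate k id) = k \<and>
      (\<forall>h\<in>set (replicate k (id::ab_fact set \<Rightarrow> ab_fact set)). hypothetical h)"
    using fx by (auto simp: hypothetical_def)
next
  fix x :: "nat set" and j :: nat assume x: "x \<subseteq> {..<1}" and j: "j < 1"
  show "Q_NOTSUB (scenario_inst (A_fact ` x) (replicate k id) {0}) = (j \<in> x)"
    unfolding scen_replicate[OF k] Q_NOTSUB_def using j x by auto
qed

lemma T_derived_empty: "T_derived {} y \<Longrightarrow> y = const_s"
  by (induction rule: T_derived.induct) auto

lemma small_conn:
  assumes sch: "provisioning_scheme Q_CONN k compress extract" and k: "1 \<le> k"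
  shows "\<exists>I hs \<Gamma>. finite I \<and> card I \<le> 1 \<and> length hs = k \<and> (\<forall>h\<in>set hs. hypothetical h) \<and> \<Gamma> \<in> set_pmf (compress I hs) \<and> 38 * 1 \<le> 100 * length \<Gamma>"
proof (rule scheme_bound[OF sch, where Ss = "\<lambda>_. {0}" and Inst = "\<lambda>x::nat set. (\<lambda>_. E_fact const_s const_t) ` x" and Hs = "\<lambda>x. replicate k id"])
  fix j show "{0::nat} \<noteq> {} \<and> {0} \<subseteq> {..<k}" using k by auto
next
  fix x :: "nat set" assume x: "x \<subseteq> {..<1}"
  hence fx: "finite x" by (rule finite_subset) simp
  have "card x \<le> 1" using card_mono[OF _ x] by simp
  moreover have "card ((\<lambda>_. E_fact const_s const_t) ` x) \<le> card x" by (rule card_image_le[OF fx])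
  ultimately show "finite ((\<lambda>_. E_fact const_s const_t) ` x) \<and> card ((\<lambda>_. E_fact const_s const_t) ` x) \<le> 1 \<and> length (replicate k id) = k \<and>
      (\<forall>h\<in>set (replicate k (id::e_fact set \<Rightarrow> e_fact set)). hypothetical h)"
    using fx by (auto simp: hypothetical_def)
next
  fix x :: "nat set" and j :: nat assume x: "x \<subseteq> {..<1}" and j: "j < 1"
  show "Q_CONN (scenario_inst ((\<lambda>_. E_fact const_s const_t) ` x) (replicate k id) {0}) = (j \<in> x)"
    unfolding scen_replicate[OF k] Q_CONN_def
  proof (cases "x = {}")
    case True
    have "\<not> T_derived {} const_t" using T_derived_empty by (force simp: const_s_def const_t_def)
    with True j show "T_derived ((\<lambda>_. E_fact const_s const_t) ` x) const_t = (j \<in> x)" by simp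
  next
    case False
    with x have "x = {0}" by auto
    moreover have "T_derived {E_fact const_s const_t} const_t"
      by (rule T_derived.T_step[OF T_derived.T_base]) simp
    ultimately show "T_derived ((\<lambda>_. E_fact const_s const_t) ` x) const_t = (j \<in> x)" using j by simp
  qed
qed

lemma exists_m: "3 \<le> (n::nat) \<Longrightarrow> \<exists>m. m \<le> M \<and> 3*2^m \<le> n \<and> (m = M \<or> n < 6*2^m)"
proof (induction M)
  case 0 then show ?case by auto
next
  case (Suc M)
  then obtain m where m: "m \<le> M" "3*2^m \<le> n" "m = M \<or> n < 6*2^m" by blast
  show ?case
  proof (cases "n < 6*2^m")
    case True with m show ?thesis by (intro exI[of _ m]) auto
  next
    case False
    with m have "m = M" by auto
    with False show ?thesis by (intro exI[of _ "Suc M"]) auto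
  qed
qed

lemma final_generic:
  fixes Q :: "'f set \<Rightarrow> bool"
  assumes small: "\<And>k compress extract. 1 \<le> k \<Longrightarrow> provisioning_scheme Q k compress extract \<Longrightarrow>
     \<exists>I hs \<Gamma>. finite I \<and> card I \<le> 1 \<and> length hs = k \<and> (\<forall>h\<in>set hs. hypothetical h) \<and> \<Gamma> \<in> set_pmf (compress I hs) \<and> 38 * 1 \<le> 100 * length \<Gamma>"
  and big: "\<And>k m compress extract. 2*m < k \<Longrightarrow> provisioning_scheme Q k compress extract \<Longrightarrow>
     \<exists>I hs \<Gamma>. finite I \<and> card I \<le> 3*2^m \<and> length hs = k \<and> (\<forall>h\<in>set hs. hypothetical h) \<and> \<Gamma> \<in> set_pmf (compress I hs) \<and> 38 * 2^m \<le> 100 * length \<Gamma>"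
  shows "requires_sketch_size Q"
  unfolding requires_sketch_size_def
proof (intro exI[of _ "1/20"] conjI allI impI)
  fix k n :: nat and cmp :: "'f set \<Rightarrow> ('f set \<Rightarrow> 'f set) list \<Rightarrow> bool list pmf" and ext
  assume k: "1 \<le> k" and sch: "provisioning_scheme Q k cmp ext"
  let ?B = "\<lambda>\<Gamma>. (1/20::real) * min (2 powr (1/20 * real k)) (real n) \<le> real (length \<Gamma>)"
  show "\<exists>I hs \<Gamma>. finite I \<and> card I \<le> n \<and> length hs = k \<and> (\<forall>h\<in>set hs. hypothetical h) \<and>
          \<Gamma> \<in> set_pmf (cmp I hs) \<and> ?B \<Gamma>"
  proof (cases "n = 0")
    case True
    obtain \<Gamma> where "\<Gamma> \<in> set_pmf (cmp {} (replicate k id))" using set_pmf_not_empty by fast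
    moreover have "?B \<Gamma>" using True by simp
    ultimately show ?thesis by (intro exI[of _ "{}"] exI[of _ "replicate k id"] exI[of _ \<Gamma>]) (auto simp: hypothetical_def)
  next
    case n0: False
    show ?thesis
    proof (cases "n < 3")
      case True
      from small[OF k sch] obtain I hs \<Gamma> where H: "finite I" "card I \<le> 1" "length hs = k" "\<forall>h\<in>set hs. hypothetical h"
        "\<Gamma> \<in> set_pmf (cmp I hs)" "38 * 1 \<le> 100 * length \<Gamma>" by blast
      have "1 \<le> length \<Gamma>" using H(6) by linarith
      moreover have "min (2 powr (1/20 * real k)) (real n) \<le> real n" by simp
      moreover have "real n \<le> 2" using True by simp
      ultimately have "?B \<Gamma>" by linarith
      with H n0 show ?thesis by (intro exI[of _ I] exI[of _ hs] exI[of _ \<Gamma>]) auto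
    next
      case False
      define M where "M = (k - 1) div 2"
      have kM: "2*M < k" "k \<le> 2*M + 2" using k unfolding M_def by auto
      from exists_m[of n M] False obtain m where m: "m \<le> M" "3*2^m \<le> n" "m = M \<or> n < 6*2^m" by auto
      have km: "2*m < k" using m(1) kM by linarith
      from big[OF km sch] obtain I hs \<Gamma> where H: "finite I" "card I \<le> 3*2^m" "length hs = k" "\<forall>h\<in>set hs. hypothetical h"
        "\<Gamma> \<in> set_pmf (cmp I hs)" "38 * 2^m \<le> 100 * length \<Gamma>" by blast
      have L: "38 * real (2^m) \<le> 100 * real (length \<Gamma>)" using H(6) by (metis of_nat_le_iff of_nat_mult of_nat_numeral)
      have "?B \<Gamma>"
      proof (cases "m = M")
        case True
        have "1/20 * real k \<le> real (M + 1)" using kM(2) by linarith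
        hence "2 powr (1/20 * real k) \<le> 2 powr real (M+1)" by (rule powr_mono) simp
        also have "\<dots> = 2^(M+1)" by (rule powr_realpow) simp
        also have "\<dots> = 2 * real (2^m)" using True by simp
        finally have "min (2 powr (1/20 * real k)) (real n) \<le> 2 * real (2^m)" by linarith
        with L show ?thesis by linarith
      next
        case False
        with m(3) have "real n < 6 * real (2^m)" by (metis of_nat_less_iff of_nat_mult of_nat_numeral)
        hence "min (2 powr (1/20 * real k)) (real n) \<le> 6 * real (2^m)" by linarith
        with L show ?thesis by linarith
      qed
      moreover have "card I \<le> n" using H(2) m(2) by linarith
      ultimately show ?thesis using H by (intro exI[of _ I] exI[of _ hs] exI[of _ \<Gamma>]) auto
    qed
  qed
qed simp

theorem mainTheorem14:
  shows "requires_sketch_size Q_NOTSUB \<and> requires_sketch_size Q_CONN"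
proof
  show "requires_sketch_size Q_NOTSUB"
  proof (rule final_generic)
    fix k m cmp ext assume km: "2*m < k" and sch: "provisioning_scheme Q_NOTSUB k cmp ext"
    from notsub_constr[OF sch km] obtain I hs \<Gamma> where H: "finite I" "card I \<le> 2*2^m" "length hs = k"
      "\<forall>h\<in>set hs. hypothetical h" "\<Gamma> \<in> set_pmf (cmp I hs)" "38 * 2^m \<le> 100 * length \<Gamma>" by blast
    have "card I \<le> 3*2^m" using H(2) by linarith
    with H show "\<exists>I hs \<Gamma>. finite I \<and> card I \<le> 3*2^m \<and> length hs = k \<and> (\<forall>h\<in>set hs. hypothetical h) \<and> \<Gamma> \<in> set_pmf (cmp I hs) \<and> 38 * 2^m \<le> 100 * length \<Gamma>"
      by blast
  qed (rule small_notsub)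
  show "requires_sketch_size Q_CONN"
    by (rule final_generic) (rule small_conn, assumption+, rule conn_constr, assumption+)
qed

end
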